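(* Let $R>0$ and $\Theta=(\alpha,\rho_r,\rho_d,\rho_s,\rho_0,T)$ with $\alpha>1$, $\rho_r,\rho_d,\rho_s,\rho_0>0$, $T>1$; set $\beta=\rho_d/\rho_r$, $\delta=\rho_s/\rho_r$, $\mu=\rho_0/\rho_r$, $K_{max}(\Theta)=\min\big(\frac T4,\frac1{3\mu},\frac{3\beta}{2\mu}\big)$. Suppose $K_{max}(\Theta)>10$, $\rho_r>\frac{\alpha}{2\delta}$, $\rho_r>\frac{3\alpha}{4(1+\beta)^2R}g^2\big(\frac{4R}{3K_{max}(\Theta)}\big)$ and $\rho_r<\frac{\alpha}{(1+\beta)^2}\frac{g^2(R)}{R}$. Then $$\zeta'_{zf}(R,\Theta)>\frac38\,\zeta'_{csi}\Big(\frac{4R}{3},\Theta\Big)>\frac38\,\zeta'_{csi}(R,\Theta).$$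
   Context: $g(x)=\sqrt{\frac{x}{2^x-1}}\big(2^x x\ln2-2^x+1\big)$, $x>0$. For rate $r>0$ and reals $M>K$, $1\le K\le\tau<T$, $$\gamma_u=\frac{K+\tau}{2\tau(M-K)}\Big(2^{\frac{r}{K(1-\tau/T)}}-1\Big)+\sqrt{\Big(\frac{K+\tau}{2\tau(M-K)}\Big(2^{\frac{r}{K(1-\tau/T)}}-1\Big)\Big)^2+\frac{2^{\frac{r}{K(1-\tau/T)}}-1}{\tau(M-K)}},$$ $$\frac{r}{\zeta_{zf}(M,K,\tau,r,\Theta)}=\alpha K\gamma_u+\rho_s+K\Big(\rho_d+\frac{8K^2\rho_0}{3T}\Big)+M\Big(\rho_r+2K\rho_0+\frac{4K^2\rho_0}{T}\Big).$$ $\zeta'_{zf}(r,\Theta)$ is the supremum of $\zeta_{zf}$ over real $(M,K,\tau)$ with $1\le K\le K_{max}(\Theta)$, $K\le\tau<T$, $M>K$. For real $M>K\ge1$, $\frac{1}{\zeta_{csi}(M,K,r,\Theta)}=\frac1r\big[\frac{\alpha K}{M-K}(2^{r/K}-1)+M\rho_r+K\rho_d+\rho_s\big]$ and $\zeta'_{csi}(r,\Theta)$ is its maximum over real $(M,K)$ with $1\le K\le K_{max}(\Theta)$, $M>K$. *)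

theory Defs
  imports Complex_Main
begin

definition g :: "real \<Rightarrow> real" where
  "g x = sqrt (x / (2 powr x - 1)) * (2 powr x * x * ln 2 - 2 powr x + 1)"

definition gamma_u :: "real \<Rightarrow> real \<Rightarrow> real \<Rightarrow> real \<Rightarrow> real \<Rightarrow> real" where
  "gamma_u T M K \<tau> r =
     (let c = (K + \<tau>) / (2 * \<tau> * (M - K)) * (2 powr (r / (K * (1 - \<tau> / T))) - 1)
      in c + sqrt (c\<^sup>2 + (2 powr (r / (K * (1 - \<tau> / T))) - 1) / (\<tau> * (M - K))))"

text \<open>Theta = (alpha, rho_r, rho_d, rho_s, rho_0, T), passed as separate reals.\<close>

definition zeta_zf :: "real \<Rightarrow> real \<Rightarrow> real \<Rightarrow> real \<Rightarrow> real \<Rightarrow> real \<Rightarrow> real \<Rightarrow> real \<Rightarrow> real \<Rightarrow> real \<Rightarrow> real" where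
  "zeta_zf M K \<tau> r \<alpha> \<rho>r \<rho>d \<rho>s \<rho>0 T =
     r / (\<alpha> * K * gamma_u T M K \<tau> r + \<rho>s + K * (\<rho>d + 8 * K\<^sup>2 * \<rho>0 / (3 * T))
          + M * (\<rho>r + 2 * K * \<rho>0 + 4 * K\<^sup>2 * \<rho>0 / T))"

definition Kmax :: "real \<Rightarrow> real \<Rightarrow> real \<Rightarrow> real \<Rightarrow> real \<Rightarrow> real \<Rightarrow> real" where
  "Kmax \<alpha> \<rho>r \<rho>d \<rho>s \<rho>0 T =
     min (T / 4) (min (1 / (3 * (\<rho>0 / \<rho>r))) (3 * (\<rho>d / \<rho>r) / (2 * (\<rho>0 / \<rho>r))))"

definition zeta_zf' :: "real \<Rightarrow> real \<Rightarrow> real \<Rightarrow> real \<Rightarrow> real \<Rightarrow> real \<Rightarrow> real \<Rightarrow> real" where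
  "zeta_zf' r \<alpha> \<rho>r \<rho>d \<rho>s \<rho>0 T =
     Sup {zeta_zf M K \<tau> r \<alpha> \<rho>r \<rho>d \<rho>s \<rho>0 T | M K \<tau>.
            1 \<le> K \<and> K \<le> Kmax \<alpha> \<rho>r \<rho>d \<rho>s \<rho>0 T \<and> K \<le> \<tau> \<and> \<tau> < T \<and> K < M}"

definition zeta_csi :: "real \<Rightarrow> real \<Rightarrow> real \<Rightarrow> real \<Rightarrow> real \<Rightarrow> real \<Rightarrow> real \<Rightarrow> real \<Rightarrow> real \<Rightarrow> real" where
  "zeta_csi M K r \<alpha> \<rho>r \<rho>d \<rho>s \<rho>0 T =
     1 / ((1 / r) * (\<alpha> * K / (M - K) * (2 powr (r / K) - 1) + M * \<rho>r + K * \<rho>d + \<rho>s))"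

definition zeta_csi' :: "real \<Rightarrow> real \<Rightarrow> real \<Rightarrow> real \<Rightarrow> real \<Rightarrow> real \<Rightarrow> real \<Rightarrow> real" where
  "zeta_csi' r \<alpha> \<rho>r \<rho>d \<rho>s \<rho>0 T =
     Sup {zeta_csi M K r \<alpha> \<rho>r \<rho>d \<rho>s \<rho>0 T | M K.
            1 \<le> K \<and> K \<le> Kmax \<alpha> \<rho>r \<rho>d \<rho>s \<rho>0 T \<and> K < M}"

end

theory Submission
  imports Defs
begin

lemma psi_nonneg: fixes y :: real assumes "y \<ge> 0" shows "0 \<le> y*exp y - exp y + 1"
proof -
  have "exp (-y) \<ge> 1 - y" using exp_ge_add_one_self[of "-y"] by simp
  hence "exp y * exp (-y) \<ge> exp y * (1 - y)" by (simp add: mult_left_mono)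
  hence "1 \<ge> exp y * (1-y)" by (simp add: exp_minus)
  thus ?thesis by (simp add: algebra_simps)
qed

lemma q_deriv:
  fixes L x :: real assumes "L > 0" "x > 0"
  shows "((\<lambda>x. (L*x*exp(L*x) - exp(L*x) + 1)^2 / (exp(L*x) - 1)) has_real_derivative
     L * exp(L*x) * (L*x*exp(L*x) - exp(L*x) + 1) * (L*x*exp(L*x) - 2*L*x + exp(L*x) - 1) / (exp(L*x) - 1)^2) (at x)"
proof -
  have e1: "exp(L*x) > 1" using assms by simp
  show ?thesis
    apply (rule derivative_eq_intros refl | simp)+
    subgoal using assms by simp
    using e1 apply (simp add: divide_simps power2_eq_square)
    apply (simp add: algebra_simps)
    done

qed

definition qf :: "real \<Rightarrow> real \<Rightarrow> real" where
  "qf L x = (L*x*exp(L*x) - exp(L*x) + 1)^2 / (exp(L*x) - 1)"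

lemma q_mono:
  fixes L a b :: real assumes "L > 0" "0 < a" "a \<le> b"
  shows "qf L a \<le> qf L b"
  unfolding qf_def
proof (rule deriv_nonneg_imp_mono[OF q_deriv[OF assms(1)]])
  fix x assume x: "x \<in> {a..b}"
  hence x0: "x > 0" using assms by auto
  show "x > 0" by fact
  define y where "y = L*x"
  have y0: "y > 0" using x0 assms by (simp add: y_def)
  have e1: "exp y > 1" using y0 by simp
  have ey: "exp y \<ge> 1 + y" by (rule exp_ge_add_one_self)
  have p: "0 \<le> y*exp y - exp y + 1" using psi_nonneg y0 by simp
  have "y*exp y \<ge> y*(1+y)"
    using ey y0 by (intro mult_left_mono) auto
  hence "y*exp y \<ge> y + y*y" by (simp add: algebra_simps)
  moreover have "y*y \<ge> 0" by simp
  ultimately have r: "y*exp y - 2*y + exp y - 1 \<ge> 0" using ey by linarith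
  have "0 \<le> L * exp y * (y*exp y - exp y + 1) * (y*exp y - 2*y + exp y - 1) / (exp y - 1)^2"
    using p r e1 assms(1)
    by (intro divide_nonneg_nonneg mult_nonneg_nonneg) auto
  thus "0 \<le> L * exp(L*x) * (L*x*exp(L*x) - exp(L*x) + 1) * (L*x*exp(L*x) - 2*L*x + exp(L*x) - 1) / (exp(L*x) - 1)^2"
    by (simp add: y_def mult.assoc)
qed (use assms in auto)


lemma F_deriv:
  fixes L B Q x :: real assumes "L > 0" "x > 0"
  shows "((\<lambda>x. (2*B*sqrt(exp(L*x)-1) + Q)/x) has_real_derivative
     ((B*L*exp(L*x)/sqrt(exp(L*x)-1))*x - (2*B*sqrt(exp(L*x)-1)+Q))/x^2) (at x)"
proof -
  have e1: "exp(L*x) > 1" using assms by simp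
  have s0: "sqrt(exp(L*x)-1) > 0" using e1 by simp
  have d1: "((\<lambda>x. exp(L*x) - 1) has_real_derivative L*exp(L*x)) (at x)"
    by (auto intro!: derivative_eq_intros)
  have d2: "((\<lambda>x. sqrt(exp(L*x) - 1)) has_real_derivative inverse (sqrt (exp(L*x) - 1)) / 2 * (L*exp(L*x))) (at x)"
    by (rule DERIV_chain2[OF DERIV_real_sqrt d1]) (use e1 in linarith)
  have d3: "((\<lambda>x. 2*B*sqrt(exp(L*x)-1) + Q) has_real_derivative 2*B*(inverse (sqrt (exp(L*x) - 1)) / 2 * (L*exp(L*x)))) (at x)"
    using DERIV_add[OF DERIV_cmult[OF d2, of "2*B"] DERIV_const[of Q]] by simp
  have d4: "((\<lambda>x. (2*B*sqrt(exp(L*x)-1) + Q)/x) has_real_derivative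
     ((2*B*(inverse (sqrt (exp(L*x) - 1)) / 2 * (L*exp(L*x))))*x - (2*B*sqrt(exp(L*x)-1)+Q)*1)/(x*x)) (at x)"
    by (rule DERIV_divide[OF d3 DERIV_ident]) (use assms in simp)
  show ?thesis
    using d4 s0 assms by (simp add: power2_eq_square divide_simps mult.assoc)
qed

lemma key_num:
  fixes L B C x :: real assumes "L > 0" "x > 0" "B \<ge> 0" "C \<ge> 0" "B^2 * qf L x \<le> C^2"
  shows "(B*L*exp(L*x)/sqrt(exp(L*x)-1))*x - 2*B*sqrt(exp(L*x)-1) \<le> C"
proof -
  define e where "e = exp(L*x)"
  define u where "u = sqrt(e-1)"
  define p where "p = L*x*e - e + 1"
  have e1: "e > 1" using assms by (simp add: e_def)
  have u0: "u > 0" using e1 by (simp add: u_def)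
  have uu: "u^2 = e - 1" using e1 by (simp add: u_def)
  have p0: "p \<ge> 0" using psi_nonneg[of "L*x"] assms by (simp add: p_def e_def)
  have eq0: "(B*L*e/u)*x - 2*B*u = B*(L*x*e - 2*u^2)/u"
    using u0 by (simp add: field_simps power2_eq_square)
  have "L*x*e - 2*u^2 = p - u^2" using uu by (simp add: p_def)
  hence eq: "(B*L*e/u)*x - 2*B*u = B*p/u - B*u"
    using eq0 u0 by (simp add: diff_divide_distrib power2_eq_square right_diff_distrib)
  have "(B*p/u)^2 = B^2 * qf L x"
    using uu by (simp add: qf_def p_def e_def power_divide power_mult_distrib)
  hence "(B*p/u)^2 \<le> C^2" using assms by simp
  hence "B*p/u \<le> C" using assms by (meson power2_le_imp_le)
  moreover have "B*u \<ge> 0" using assms u0 by simp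
  ultimately show ?thesis using eq by (simp add: e_def[symmetric] u_def[symmetric])
qed

lemma F_dec:
  fixes L B C s x0 x1 :: real
  assumes "L > 0" "B \<ge> 0" "C \<ge> 0" "s > 0" "0 < x1" "x1 \<le> x0" "B^2 * qf L x0 \<le> C^2"
  shows "(2*B*sqrt(exp(L*x0)-1) + (C+s))/x0 \<le> (2*B*sqrt(exp(L*x1)-1) + (C+s))/x1 - s*(x0-x1)/x0^2"
proof -
  let ?F = "\<lambda>x. (2*B*sqrt(exp(L*x)-1) + (C+s))/x + s*x/x0^2"
  have "?F x0 \<le> ?F x1"
  proof (rule deriv_nonpos_imp_antimono[where g = ?F and g' = "\<lambda>x. ((B*L*exp(L*x)/sqrt(exp(L*x)-1))*x - (2*B*sqrt(exp(L*x)-1)+(C+s)))/x^2 + s/x0^2"])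
    fix x assume x: "x \<in> {x1..x0}"
    hence xp: "x > 0" using assms by auto
    show "(?F has_real_derivative
       ((B*L*exp(L*x)/sqrt(exp(L*x)-1))*x - (2*B*sqrt(exp(L*x)-1)+(C+s)))/x^2 + s/x0^2) (at x)"
      by (rule DERIV_add[OF F_deriv[OF assms(1) xp]]) (use xp x in \<open>auto intro!: derivative_eq_intros simp: power2_eq_square\<close>)
    have qx: "qf L x \<le> qf L x0" using q_mono[OF assms(1) xp] x by auto
    have "B^2 * qf L x \<le> B^2 * qf L x0" using qx by (simp add: mult_left_mono)
    hence "(B*L*exp(L*x)/sqrt(exp(L*x)-1))*x - 2*B*sqrt(exp(L*x)-1) \<le> C"
      using key_num[OF assms(1) xp assms(2,3)] assms(7) by linarith
    hence num: "((B*L*exp(L*x)/sqrt(exp(L*x)-1))*x - (2*B*sqrt(exp(L*x)-1)+(C+s))) \<le> -s" by linarith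
    have "x^2 \<le> x0^2" using x xp by (auto intro: power_mono)
    hence "s/x0^2 \<le> s/x^2" using xp assms(4) x by (intro divide_left_mono) auto
    moreover have "((B*L*exp(L*x)/sqrt(exp(L*x)-1))*x - (2*B*sqrt(exp(L*x)-1)+(C+s)))/x^2 \<le> -s/x^2"
      using num xp by (intro divide_right_mono) auto
    moreover have "(-s)/x^2 = -(s/x^2)" by simp
    ultimately show "((B*L*exp(L*x)/sqrt(exp(L*x)-1))*x - (2*B*sqrt(exp(L*x)-1)+(C+s)))/x^2 + s/x0^2 \<le> 0"
      by linarith
  qed (use assms in auto)
  hence "(2*B*sqrt(exp(L*x0)-1) + (C+s))/x0 \<le> (2*B*sqrt(exp(L*x1)-1) + (C+s))/x1 + s*x1/x0^2 - s*x0/x0^2"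
    by linarith
  moreover have "s*x1/x0^2 - s*x0/x0^2 = - (s*(x0-x1)/x0^2)" using assms by (simp add: divide_simps algebra_simps)
  ultimately show ?thesis by linarith
qed


definition Pc :: "real \<Rightarrow> real \<Rightarrow> real \<Rightarrow> real \<Rightarrow> real \<Rightarrow> real \<Rightarrow> real" where
  "Pc \<alpha> \<rho>r \<rho>d \<rho>s r K = 2*sqrt(\<alpha>*\<rho>r*K*(2 powr (r/K) - 1)) + K*(\<rho>r+\<rho>d) + \<rho>s"

lemma amgm: fixes a b m :: real assumes "a \<ge> 0" "b \<ge> 0" "m > 0"
  shows "2*sqrt(a*b) \<le> a/m + m*b"
proof -
  have "sqrt(a*b) = sqrt(a/m) * sqrt(m*b)" using assms by (simp add: real_sqrt_mult[symmetric])
  moreover have "2*(sqrt(a/m) * sqrt(m*b)) \<le> (sqrt(a/m))^2 + (sqrt(m*b))^2"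
  proof -
    have "0 \<le> (sqrt(a/m) - sqrt(m*b))^2" by simp
    thus ?thesis by (simp add: power2_diff)
  qed
  moreover have "(sqrt(a/m))^2 = a/m" "(sqrt(m*b))^2 = m*b" using assms by auto
  ultimately show ?thesis by simp
qed

lemma E_pos: fixes r K :: real assumes "r > 0" "K > 0" shows "2 powr (r/K) - 1 > 0"
proof -
  have "r/K > 0" using assms by simp
  hence "2 powr (r/K) > 2 powr 0" by (intro powr_less_mono) auto
  thus ?thesis by simp
qed

lemma csi_eq:
  assumes "r > 0" "K > 0" "M > K" "\<alpha> > 0" "\<rho>r > 0" "\<rho>d > 0" "\<rho>s > 0"
  shows "zeta_csi M K r \<alpha> \<rho>r \<rho>d \<rho>s \<rho>0 T = r / (\<alpha>*K/(M-K)*(2 powr (r/K) - 1) + M*\<rho>r + K*\<rho>d + \<rho>s)"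
    and "\<alpha>*K/(M-K)*(2 powr (r/K) - 1) + M*\<rho>r + K*\<rho>d + \<rho>s \<ge> \<rho>s"
proof -
  have E: "2 powr (r/K) - 1 > 0" using E_pos assms by simp
  have E0: "0 \<le> 2 powr (r/K) - 1" using E by simp
  have "\<alpha>*K/(M-K)*(2 powr (r/K) - 1) \<ge> 0" using assms E0 by simp
  thus ge: "\<alpha>*K/(M-K)*(2 powr (r/K) - 1) + M*\<rho>r + K*\<rho>d + \<rho>s \<ge> \<rho>s" using assms by simp
  show "zeta_csi M K r \<alpha> \<rho>r \<rho>d \<rho>s \<rho>0 T = r / (\<alpha>*K/(M-K)*(2 powr (r/K) - 1) + M*\<rho>r + K*\<rho>d + \<rho>s)"
    unfolding zeta_csi_def using assms ge by (simp add: divide_simps)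
qed

lemma csi_le_P:
  assumes "r > 0" "K > 0" "M > K" "\<alpha> > 0" "\<rho>r > 0" "\<rho>d > 0" "\<rho>s > 0"
  shows "zeta_csi M K r \<alpha> \<rho>r \<rho>d \<rho>s \<rho>0 T \<le> r / Pc \<alpha> \<rho>r \<rho>d \<rho>s r K"
    and "Pc \<alpha> \<rho>r \<rho>d \<rho>s r K > 0"
proof -
  define E where "E = 2 powr (r/K) - 1"
  have E: "E > 0" using E_pos assms by (simp add: E_def)
  have a: "2*sqrt((\<alpha>*K*E)*\<rho>r) \<le> (\<alpha>*K*E)/(M-K) + (M-K)*\<rho>r"
    using assms less_imp_le[OF E] by (intro amgm) simp_all
  have b: "\<alpha>*K/(M-K)*E + M*\<rho>r + K*\<rho>d + \<rho>s = (\<alpha>*K*E)/(M-K) + (M-K)*\<rho>r + K*(\<rho>r+\<rho>d) + \<rho>s"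
    by (simp add: algebra_simps)
  have c: "sqrt((\<alpha>*K*E)*\<rho>r) = sqrt(\<alpha>*\<rho>r*K*E)" by (simp add: ac_simps)
  have le: "Pc \<alpha> \<rho>r \<rho>d \<rho>s r K \<le> \<alpha>*K/(M-K)*(2 powr (r/K) - 1) + M*\<rho>r + K*\<rho>d + \<rho>s"
    unfolding Pc_def E_def[symmetric] b using a c by linarith
  have "sqrt(\<alpha>*\<rho>r*K*E) \<ge> 0" using assms E by simp
  thus pos: "Pc \<alpha> \<rho>r \<rho>d \<rho>s r K > 0" unfolding Pc_def E_def[symmetric] using assms
    by (smt (verit) mult_pos_pos)
  show "zeta_csi M K r \<alpha> \<rho>r \<rho>d \<rho>s \<rho>0 T \<le> r / Pc \<alpha> \<rho>r \<rho>d \<rho>s r K"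
    unfolding csi_eq[OF assms] using assms pos le by (intro divide_left_mono) auto
qed

lemma csi_opt:
  assumes "r > 0" "K > 0" "\<alpha> > 0" "\<rho>r > 0" "\<rho>d > 0" "\<rho>s > 0"
  shows "\<exists>M. M > K \<and> zeta_csi M K r \<alpha> \<rho>r \<rho>d \<rho>s \<rho>0 T = r / Pc \<alpha> \<rho>r \<rho>d \<rho>s r K"
proof -
  define E where "E = 2 powr (r/K) - 1"
  have E: "E > 0" using E_pos assms by (simp add: E_def)
  define m where "m = sqrt(\<alpha>*K*E/\<rho>r)"
  have m: "m > 0" using assms E by (simp add: m_def)
  have mm: "m*m = \<alpha>*K*E/\<rho>r" using assms E by (simp add: m_def)
  have "\<alpha>*K*E/m = m*\<rho>r" using m mm assms by (simp add: field_simps)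
  moreover have "m*\<rho>r = sqrt(\<alpha>*\<rho>r*K*E)"
  proof -
    have "(m*\<rho>r)^2 = \<alpha>*\<rho>r*K*E" using mm assms by (simp add: power2_eq_square field_simps)
    moreover have "m*\<rho>r \<ge> 0" using m assms by simp
    ultimately show ?thesis by (simp add: real_sqrt_unique)
  qed
  ultimately have "\<alpha>*K/((K+m)-K)*E + (K+m)*\<rho>r + K*\<rho>d + \<rho>s = Pc \<alpha> \<rho>r \<rho>d \<rho>s r K"
    unfolding Pc_def E_def[symmetric] by (simp add: algebra_simps)
  moreover have "K + m > K" using m by simp
  ultimately show ?thesis using csi_eq(1)[OF assms(1,2) \<open>K+m>K\<close> assms(3-), of \<rho>0 T] unfolding E_def
    by (intro exI[of _ "K+m"]) simp
qed


lemma gamma_bound: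
  fixes T M K \<tau> r :: real
  assumes "0 < K" "K \<le> \<tau>" "\<tau> < T" "K < M" "r > 0"
  shows "gamma_u T M K \<tau> r \<le> 2*((2 powr (r/(K*(1-\<tau>/T))) - 1)/(M-K)) + 1/(K+\<tau>)"
    and "gamma_u T M K \<tau> r \<ge> 0"
proof -
  define E where "E = 2 powr (r/(K*(1-\<tau>/T))) - 1"
  have T0: "T > 0" using assms by simp
  have "1 - \<tau>/T > 0" using assms T0 by (simp add: field_simps)
  hence E: "E > 0" unfolding E_def using assms by (intro E_pos) auto
  define a where "a = E/(M-K)"
  define s where "s = (K+\<tau>)/(2*\<tau>)"
  have a0: "a \<ge> 0" using E assms by (simp add: a_def)
  have tau0: "\<tau> > 0" using assms by simp
  have s1: "s \<le> 1" "s \<ge> 0" using assms tau0 by (auto simp: s_def field_simps)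
  have c: "(K + \<tau>) / (2 * \<tau> * (M - K)) * E = s*a" by (simp add: s_def a_def)
  have d: "E / (\<tau> * (M - K)) = a/\<tau>" by (simp add: a_def)
  have sq: "(s*a)^2 + a/\<tau> \<le> (s*a + 1/(K+\<tau>))^2"
  proof -
    have kt: "K + \<tau> \<noteq> 0" "\<tau> \<noteq> 0" using assms tau0 by auto
    have "2*(s*a)*(1/(K+\<tau>)) = a/\<tau> * ((K+\<tau>)/(K+\<tau>))" using kt by (simp add: s_def)
    hence "2*(s*a)*(1/(K+\<tau>)) = a/\<tau>" using kt by simp
    thus ?thesis by (simp add: power2_sum)
  qed
  have "sqrt((s*a)^2 + a/\<tau>) \<le> sqrt((s*a + 1/(K+\<tau>))^2)" using sq by (rule real_sqrt_le_mono)
  also have "\<dots> = s*a + 1/(K+\<tau>)" using s1 a0 assms tau0 by simp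
  finally have b: "sqrt((s*a)^2 + a/\<tau>) \<le> s*a + 1/(K+\<tau>)" .
  have g: "gamma_u T M K \<tau> r = s*a + sqrt((s*a)^2 + a/\<tau>)"
    unfolding gamma_u_def Let_def E_def[symmetric] c d ..
  have "s*a \<le> a" using s1 a0 by (simp add: mult_left_le_one_le)
  thus "gamma_u T M K \<tau> r \<le> 2*((2 powr (r/(K*(1-\<tau>/T))) - 1)/(M-K)) + 1/(K+\<tau>)"
    unfolding g E_def[symmetric] a_def[symmetric] using b by linarith
  have "sqrt((s*a)^2 + a/\<tau>) \<ge> sqrt((s*a)^2)" using a0 tau0 by (intro real_sqrt_le_mono) simp
  moreover have "sqrt((s*a)^2) = s*a" using s1 a0 by simp
  moreover have "s*a \<ge> 0" using s1 a0 by simp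
  ultimately show "gamma_u T M K \<tau> r \<ge> 0" unfolding g by linarith
qed


lemma zf_le:
  fixes M K \<tau> r \<alpha> \<rho>r \<rho>d \<rho>s \<rho>0 T :: real
  assumes "1 \<le> K" "K \<le> \<tau>" "\<tau> < T" "K < M" "r > 0"
    "\<alpha> > 0" "\<rho>r > 0" "\<rho>d > 0" "\<rho>s > 0" "\<rho>0 > 0"
  shows "zeta_zf M K \<tau> r \<alpha> \<rho>r \<rho>d \<rho>s \<rho>0 T \<le> r/\<rho>s"
proof -
  have T0: "T > 0" using assms by simp
  have g: "gamma_u T M K \<tau> r \<ge> 0" using gamma_bound(2)[of K \<tau> T M r] assms by simp
  define D where "D = \<alpha> * K * gamma_u T M K \<tau> r + \<rho>s + K * (\<rho>d + 8 * K\<^sup>2 * \<rho>0 / (3 * T))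
          + M * (\<rho>r + 2 * K * \<rho>0 + 4 * K\<^sup>2 * \<rho>0 / T)"
  have "\<alpha> * K * gamma_u T M K \<tau> r \<ge> 0" using g assms by simp
  moreover have "K * (\<rho>d + 8 * K\<^sup>2 * \<rho>0 / (3 * T)) \<ge> 0" using assms T0 by simp
  moreover have "M * (\<rho>r + 2 * K * \<rho>0 + 4 * K\<^sup>2 * \<rho>0 / T) \<ge> 0" using assms T0 by simp
  ultimately have "D \<ge> \<rho>s" unfolding D_def by linarith
  hence "r / D \<le> r/\<rho>s" using assms by (intro divide_left_mono) auto
  thus ?thesis unfolding zeta_zf_def D_def .
qed

lemma zf_point:
  fixes M K R \<alpha> \<rho>r \<rho>d \<rho>s \<rho>0 T :: real
  assumes "1 \<le> K" "K \<le> T/4" "K < M" "R > 0" "T > 0"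
    "\<alpha> > 0" "\<rho>r > 0" "\<rho>d > 0" "\<rho>s > 0" "\<rho>0 > 0"
    "3*\<rho>0*K \<le> \<rho>r" "2*\<rho>0*K \<le> 3*\<rho>d"
  shows "zeta_zf M K (T/4) R \<alpha> \<rho>r \<rho>d \<rho>s \<rho>0 T \<ge>
      R / (2*(\<alpha>*K/(M-K)*(2 powr ((4*R/3)/K) - 1) + M*\<rho>r + K*\<rho>d + \<rho>s) - (\<rho>s - \<alpha>/2))"
proof -
  define E where "E = 2 powr ((4*R/3)/K) - 1"
  have ex: "R/(K*(1-(T/4)/T)) = (4*R/3)/K" using assms by (simp add: field_simps)
  have gb: "gamma_u T M K (T/4) R \<le> 2*(E/(M-K)) + 1/(K+T/4)"
    using gamma_bound(1)[of K "T/4" T M R] assms unfolding ex E_def by simp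
  have K0: "K > 0" using assms by simp
  have "\<alpha>*K*gamma_u T M K (T/4) R \<le> \<alpha>*K*(2*(E/(M-K)) + 1/(K+T/4))"
    using gb assms K0 by (intro mult_left_mono) auto
  moreover have "\<alpha>*K*(1/(K+T/4)) \<le> \<alpha>/2"
  proof -
    have "K/(K+T/4) \<le> 1/2" using assms K0 by (simp add: field_simps)
    hence "\<alpha>*(K/(K+T/4)) \<le> \<alpha>*(1/2)" using assms by (intro mult_left_mono) auto
    thus ?thesis by simp
  qed
  moreover have "\<alpha>*K*(2*(E/(M-K)) + 1/(K+T/4)) = 2*(\<alpha>*K/(M-K)*E) + \<alpha>*K*(1/(K+T/4))"
    by (simp add: algebra_simps)
  ultimately have A: "\<alpha>*K*gamma_u T M K (T/4) R \<le> 2*(\<alpha>*K/(M-K)*E) + \<alpha>/2"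
    by linarith
  have KK: "K\<^sup>2 / T \<le> K/4" using assms K0 by (simp add: field_simps power2_eq_square)
  have B: "K * (\<rho>d + 8 * K\<^sup>2 * \<rho>0 / (3 * T)) \<le> 2*K*\<rho>d"
  proof -
    have "8 * K\<^sup>2 * \<rho>0 / (3 * T) = (8*\<rho>0/3) * (K\<^sup>2 / T)" by simp
    also have "\<dots> \<le> (8*\<rho>0/3) * (K/4)" using KK assms by (intro mult_left_mono) auto
    also have "\<dots> \<le> \<rho>d" using assms(12) by (simp add: algebra_simps)
    finally have "8 * K\<^sup>2 * \<rho>0 / (3 * T) \<le> \<rho>d" .
    hence "K * (\<rho>d + 8 * K\<^sup>2 * \<rho>0 / (3 * T)) \<le> K*(\<rho>d + \<rho>d)" using K0 by (intro mult_left_mono) auto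
    thus ?thesis by simp
  qed
  have C: "M * (\<rho>r + 2 * K * \<rho>0 + 4 * K\<^sup>2 * \<rho>0 / T) \<le> 2*M*\<rho>r"
  proof -
    have "4 * K\<^sup>2 * \<rho>0 / T = (4*\<rho>0) * (K\<^sup>2 / T)" by simp
    also have "\<dots> \<le> (4*\<rho>0) * (K/4)" using KK assms by (intro mult_left_mono) auto
    finally have "4 * K\<^sup>2 * \<rho>0 / T \<le> \<rho>0 * K" by simp
    moreover have "3*\<rho>0*K = 3*(\<rho>0*K)" "2 * K * \<rho>0 = 2*(\<rho>0*K)" by simp_all
    ultimately have "\<rho>r + 2 * K * \<rho>0 + 4 * K\<^sup>2 * \<rho>0 / T \<le> 2*\<rho>r" using assms(11) by linarith
    thus ?thesis using assms K0 by (simp add: mult_left_mono)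
  qed
  define Dz where "Dz = \<alpha> * K * gamma_u T M K (T/4) R + \<rho>s + K * (\<rho>d + 8 * K\<^sup>2 * \<rho>0 / (3 * T))
          + M * (\<rho>r + 2 * K * \<rho>0 + 4 * K\<^sup>2 * \<rho>0 / T)"
  have Dle: "Dz \<le> 2*(\<alpha>*K/(M-K)*E + M*\<rho>r + K*\<rho>d + \<rho>s) - (\<rho>s - \<alpha>/2)"
    unfolding Dz_def using A B C by (simp add: algebra_simps)
  have g: "gamma_u T M K (T/4) R \<ge> 0" using gamma_bound(2)[of K "T/4" T M R] assms by simp
  have "Dz \<ge> \<rho>s"
  proof -
    have "\<alpha> * K * gamma_u T M K (T/4) R \<ge> 0" using g assms by simp
    moreover have "K * (\<rho>d + 8 * K\<^sup>2 * \<rho>0 / (3 * T)) \<ge> 0" using assms by simp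
    moreover have "M * (\<rho>r + 2 * K * \<rho>0 + 4 * K\<^sup>2 * \<rho>0 / T) \<ge> 0" using assms K0 by simp
    ultimately show ?thesis unfolding Dz_def by linarith
  qed
  hence "R / (2*(\<alpha>*K/(M-K)*E + M*\<rho>r + K*\<rho>d + \<rho>s) - (\<rho>s - \<alpha>/2)) \<le> R / Dz"
    using Dle assms by (intro divide_left_mono) auto
  thus ?thesis unfolding zeta_zf_def Dz_def[symmetric] E_def .
qed


lemma csi_set_props:
  fixes r \<alpha> \<rho>r \<rho>d \<rho>s \<rho>0 T :: real
  assumes "r > 0" "\<alpha> > 0" "\<rho>r > 0" "\<rho>d > 0" "\<rho>s > 0" "Kmax \<alpha> \<rho>r \<rho>d \<rho>s \<rho>0 T \<ge> 1"
  defines "S \<equiv> {zeta_csi M K r \<alpha> \<rho>r \<rho>d \<rho>s \<rho>0 T | M K.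
            1 \<le> K \<and> K \<le> Kmax \<alpha> \<rho>r \<rho>d \<rho>s \<rho>0 T \<and> K < M}"
  shows "bdd_above S" "S \<noteq> {}" "\<And>v. v \<in> S \<Longrightarrow> v > 0"
proof -
  show "bdd_above S" unfolding bdd_above_def
  proof (intro exI[of _ "r/\<rho>s"] ballI)
    fix v assume "v \<in> S"
    then obtain M K where v: "v = zeta_csi M K r \<alpha> \<rho>r \<rho>d \<rho>s \<rho>0 T" "1 \<le> K" "K < M" unfolding S_def by auto
    have K0: "K > 0" using v by simp
    show "v \<le> r/\<rho>s" unfolding v(1) csi_eq(1)[OF assms(1) K0 v(3) assms(2-5)]
      using csi_eq(2)[OF assms(1) K0 v(3) assms(2-5)] assms by (intro divide_left_mono) auto
  qed
  have "zeta_csi 2 1 r \<alpha> \<rho>r \<rho>d \<rho>s \<rho>0 T \<in> S" unfolding S_def using assms(6)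
    by (intro CollectI exI[of _ 2] exI[of _ 1]) simp
  thus "S \<noteq> {}" by blast
  fix v assume "v \<in> S"
  then obtain M K where v: "v = zeta_csi M K r \<alpha> \<rho>r \<rho>d \<rho>s \<rho>0 T" "1 \<le> K" "K < M" unfolding S_def by auto
  have K0: "K > 0" using v by simp
  show "v > 0" unfolding v(1) csi_eq(1)[OF assms(1) K0 v(3) assms(2-5)]
    using csi_eq(2)[OF assms(1) K0 v(3) assms(2-5)] assms by simp
qed

lemma csi_sup_ge:
  fixes r K \<alpha> \<rho>r \<rho>d \<rho>s \<rho>0 T :: real
  assumes "r > 0" "\<alpha> > 0" "\<rho>r > 0" "\<rho>d > 0" "\<rho>s > 0" "1 \<le> K" "K \<le> Kmax \<alpha> \<rho>r \<rho>d \<rho>s \<rho>0 T"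
  shows "r / Pc \<alpha> \<rho>r \<rho>d \<rho>s r K \<le> zeta_csi' r \<alpha> \<rho>r \<rho>d \<rho>s \<rho>0 T"
proof -
  have K0: "K > 0" using assms by simp
  obtain M where M: "M > K" "zeta_csi M K r \<alpha> \<rho>r \<rho>d \<rho>s \<rho>0 T = r / Pc \<alpha> \<rho>r \<rho>d \<rho>s r K"
    using csi_opt[OF assms(1) K0 assms(2-5)] by blast
  have mem: "zeta_csi M K r \<alpha> \<rho>r \<rho>d \<rho>s \<rho>0 T \<in> {zeta_csi M K r \<alpha> \<rho>r \<rho>d \<rho>s \<rho>0 T | M K.
            1 \<le> K \<and> K \<le> Kmax \<alpha> \<rho>r \<rho>d \<rho>s \<rho>0 T \<and> K < M}"
    using M assms by (intro CollectI exI[of _ M] exI[of _ K]) simp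
  have "zeta_csi M K r \<alpha> \<rho>r \<rho>d \<rho>s \<rho>0 T \<le> zeta_csi' r \<alpha> \<rho>r \<rho>d \<rho>s \<rho>0 T"
    unfolding zeta_csi'_def
    by (rule cSup_upper[OF mem csi_set_props(1)[OF assms(1-5)]]) (use assms in linarith)
  thus ?thesis using M by simp
qed

lemma csi_sup_le:
  fixes r b \<alpha> \<rho>r \<rho>d \<rho>s \<rho>0 T :: real
  assumes "r > 0" "\<alpha> > 0" "\<rho>r > 0" "\<rho>d > 0" "\<rho>s > 0" "Kmax \<alpha> \<rho>r \<rho>d \<rho>s \<rho>0 T \<ge> 1"
    "\<And>M K. 1 \<le> K \<Longrightarrow> K \<le> Kmax \<alpha> \<rho>r \<rho>d \<rho>s \<rho>0 T \<Longrightarrow> K < M \<Longrightarrow> zeta_csi M K r \<alpha> \<rho>r \<rho>d \<rho>s \<rho>0 T \<le> b"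
  shows "zeta_csi' r \<alpha> \<rho>r \<rho>d \<rho>s \<rho>0 T \<le> b"
  unfolding zeta_csi'_def
  by (rule cSup_least) (use csi_set_props(2)[OF assms(1-6)] assms(7) in auto)

lemma zf_sup_ge:
  fixes M K \<tau> r \<alpha> \<rho>r \<rho>d \<rho>s \<rho>0 T :: real
  assumes "1 \<le> K" "K \<le> Kmax \<alpha> \<rho>r \<rho>d \<rho>s \<rho>0 T" "K \<le> \<tau>" "\<tau> < T" "K < M" "r > 0"
    "\<alpha> > 0" "\<rho>r > 0" "\<rho>d > 0" "\<rho>s > 0" "\<rho>0 > 0"
  shows "zeta_zf M K \<tau> r \<alpha> \<rho>r \<rho>d \<rho>s \<rho>0 T \<le> zeta_zf' r \<alpha> \<rho>r \<rho>d \<rho>s \<rho>0 T"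
  unfolding zeta_zf'_def
proof (rule cSup_upper)
  show "zeta_zf M K \<tau> r \<alpha> \<rho>r \<rho>d \<rho>s \<rho>0 T \<in> {zeta_zf M K \<tau> r \<alpha> \<rho>r \<rho>d \<rho>s \<rho>0 T | M K \<tau>.
            1 \<le> K \<and> K \<le> Kmax \<alpha> \<rho>r \<rho>d \<rho>s \<rho>0 T \<and> K \<le> \<tau> \<and> \<tau> < T \<and> K < M}"
    using assms by blast
  show "bdd_above {zeta_zf M K \<tau> r \<alpha> \<rho>r \<rho>d \<rho>s \<rho>0 T | M K \<tau>.
            1 \<le> K \<and> K \<le> Kmax \<alpha> \<rho>r \<rho>d \<rho>s \<rho>0 T \<and> K \<le> \<tau> \<and> \<tau> < T \<and> K < M}"
    unfolding bdd_above_def using zf_le assms by blast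
qed


lemma pw2: "(2::real) powr y = exp (ln 2 * y)" by (simp add: powr_def mult.commute)

theorem lemma7:
  fixes R \<alpha> \<rho>r \<rho>d \<rho>s \<rho>0 T :: real
  assumes "R > 0"
    and "\<alpha> > 1" and "\<rho>r > 0" and "\<rho>d > 0" and "\<rho>s > 0" and "\<rho>0 > 0" and "T > 1"
    and "Kmax \<alpha> \<rho>r \<rho>d \<rho>s \<rho>0 T > 10"
    and "\<rho>r > \<alpha> / (2 * (\<rho>s / \<rho>r))"
    and "\<rho>r > 3 * \<alpha> / (4 * (1 + \<rho>d / \<rho>r)\<^sup>2 * R)
                * (g (4 * R / (3 * Kmax \<alpha> \<rho>r \<rho>d \<rho>s \<rho>0 T)))\<^sup>2"
    and "\<rho>r < \<alpha> / (1 + \<rho>d / \<rho>r)\<^sup>2 * (g R)\<^sup>2 / R"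
  shows "zeta_zf' R \<alpha> \<rho>r \<rho>d \<rho>s \<rho>0 T > 3 / 8 * zeta_csi' (4 * R / 3) \<alpha> \<rho>r \<rho>d \<rho>s \<rho>0 T
       \<and> 3 / 8 * zeta_csi' (4 * R / 3) \<alpha> \<rho>r \<rho>d \<rho>s \<rho>0 T > 3 / 8 * zeta_csi' R \<alpha> \<rho>r \<rho>d \<rho>s \<rho>0 T"
proof -
  note R0 = assms(1) and rr = assms(3) and rd = assms(4) and rs = assms(5) and r0 = assms(6)
  have a0: "\<alpha> > 0" using assms by simp
  define Km where "Km = Kmax \<alpha> \<rho>r \<rho>d \<rho>s \<rho>0 T"
  have Km10: "Km > 10" using assms by (simp add: Km_def)
  have Km_T: "Km \<le> T/4" unfolding Km_def Kmax_def by simp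
  have "Km \<le> 1 / (3 * (\<rho>0 / \<rho>r))" unfolding Km_def Kmax_def by simp
  hence Km_r: "3*\<rho>0*Km \<le> \<rho>r" using rr r0 by (simp add: field_simps)
  have "Km \<le> 3 * (\<rho>d / \<rho>r) / (2 * (\<rho>0 / \<rho>r))" unfolding Km_def Kmax_def by simp
  hence Km_d: "2*\<rho>0*Km \<le> 3*\<rho>d" using rr r0 by (simp add: field_simps)
  have Km1: "Km \<ge> 1" using Km10 by simp
  have "\<rho>r > \<alpha> * \<rho>r / (2 * \<rho>s)" using assms(9) by (simp add: field_simps)
  hence "\<rho>r * (2*\<rho>s) > \<alpha> * \<rho>r" using rs by (simp add: field_simps)
  hence eps: "\<rho>s - \<alpha>/2 > 0" using rr by (simp add: algebra_simps)
  define \<epsilon> where "\<epsilon> = \<rho>s - \<alpha>/2"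
  have e0: "\<epsilon> > 0" using eps by (simp add: \<epsilon>_def)
  define Z where "Z = zeta_zf' R \<alpha> \<rho>r \<rho>d \<rho>s \<rho>0 T"
  define S2 where "S2 = zeta_csi' (4 * R / 3) \<alpha> \<rho>r \<rho>d \<rho>s \<rho>0 T"
  define S1 where "S1 = zeta_csi' R \<alpha> \<rho>r \<rho>d \<rho>s \<rho>0 T"
  have R43: "4*R/3 > 0" using R0 by simp
  have zfb: "R / (2*(\<alpha>*K/(M-K)*(2 powr ((4*R/3)/K) - 1) + M*\<rho>r + K*\<rho>d + \<rho>s) - \<epsilon>) \<le> Z"
    and dpos: "2*(\<alpha>*K/(M-K)*(2 powr ((4*R/3)/K) - 1) + M*\<rho>r + K*\<rho>d + \<rho>s) - \<epsilon> > 0"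
    if K: "1 \<le> K" "K \<le> Km" "K < M" for M K
  proof -
    have "zeta_zf M K (T/4) R \<alpha> \<rho>r \<rho>d \<rho>s \<rho>0 T \<le> Z" unfolding Z_def
    proof (rule zf_sup_ge[OF K(1) _ _ _ K(3) R0 a0 rr rd rs r0])
      show "K \<le> Kmax \<alpha> \<rho>r \<rho>d \<rho>s \<rho>0 T" using K(2) by (simp add: Km_def)
      show "K \<le> T/4" using K(2) Km_T by linarith
      show "T/4 < T" using assms(7) by simp
    qed
    moreover have "3*\<rho>0*K \<le> \<rho>r" using Km_r K r0 by (smt (verit) mult_left_mono)
    moreover have "2*\<rho>0*K \<le> 3*\<rho>d" using Km_d K r0 by (smt (verit) mult_left_mono)
    ultimately show "R / (2*(\<alpha>*K/(M-K)*(2 powr ((4*R/3)/K) - 1) + M*\<rho>r + K*\<rho>d + \<rho>s) - \<epsilon>) \<le> Z"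
      using zf_point[of K T M R \<alpha> \<rho>r \<rho>d \<rho>s \<rho>0] K Km_T assms unfolding \<epsilon>_def by force
    have "\<alpha>*K/(M-K)*(2 powr ((4*R/3)/K) - 1) + M*\<rho>r + K*\<rho>d + \<rho>s \<ge> \<rho>s"
      using csi_eq(2)[OF R43 _ K(3) a0 rr rd rs] K by simp
    thus "2*(\<alpha>*K/(M-K)*(2 powr ((4*R/3)/K) - 1) + M*\<rho>r + K*\<rho>d + \<rho>s) - \<epsilon> > 0"
    proof -
      have gen: "\<And>X. \<rho>s \<le> X \<Longrightarrow> 0 < 2*X - (\<rho>s - \<alpha>/2)" using rs a0 by linarith
      show ?thesis unfolding \<epsilon>_def by (rule gen) fact
    qed
  qed
  have Zpos: "Z > 0"
  proof -
    have "R / (2*(\<alpha>*1/(2-1)*(2 powr ((4*R/3)/1) - 1) + 2*\<rho>r + 1*\<rho>d + \<rho>s) - \<epsilon>) > 0"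
      using dpos[of 1 2] Km1 R0 by simp
    thus ?thesis using zfb[of 1 2] Km1 by linarith
  qed
  have S2le: "S2 \<le> (8*R/3) / (R/Z + \<epsilon>)" unfolding S2_def
  proof (rule csi_sup_le[OF R43 a0 rr rd rs])
    show "1 \<le> Kmax \<alpha> \<rho>r \<rho>d \<rho>s \<rho>0 T" using Km1 by (simp add: Km_def)
    fix M K assume K: "1 \<le> K" "K \<le> Kmax \<alpha> \<rho>r \<rho>d \<rho>s \<rho>0 T" "K < M"
    hence K': "K \<le> Km" by (simp add: Km_def)
    define Dc where "Dc = \<alpha>*K/(M-K)*(2 powr ((4*R/3)/K) - 1) + M*\<rho>r + K*\<rho>d + \<rho>s"
    have Dc: "Dc \<ge> \<rho>s" unfolding Dc_def using csi_eq(2)[OF R43 _ K(3) a0 rr rd rs] K by simp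
    have w: "zeta_csi M K (4*R/3) \<alpha> \<rho>r \<rho>d \<rho>s \<rho>0 T = (4*R/3)/Dc"
      unfolding Dc_def using csi_eq(1)[OF R43 _ K(3) a0 rr rd rs] K by simp
    have z: "R / (2*Dc - \<epsilon>) \<le> Z" and dp: "2*Dc - \<epsilon> > 0" using zfb[OF K(1) K' K(3)] dpos[OF K(1) K' K(3)] by (simp_all add: Dc_def)
    have "R \<le> Z * (2*Dc - \<epsilon>)" using z dp by (simp add: divide_simps)
    hence "R/Z \<le> 2*Dc - \<epsilon>" using Zpos by (simp add: divide_simps mult.commute)
    hence "R/Z + \<epsilon> \<le> 2*Dc" by linarith
    moreover have "R/Z + \<epsilon> > 0" using Zpos R0 e0 by (smt (verit) divide_pos_pos)
    ultimately have "(8*R/3)/(2*Dc) \<le> (8*R/3) / (R/Z + \<epsilon>)" using R0 by (intro divide_left_mono) auto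
    moreover have "(8*R/3)/(2*Dc) = (4*R/3)/Dc" by simp
    ultimately show "zeta_csi M K (4*R/3) \<alpha> \<rho>r \<rho>d \<rho>s \<rho>0 T \<le> (8*R/3) / (R/Z + \<epsilon>)" using w by simp
  qed
  have partA: "3/8*S2 < Z"
  proof -
    have "3/8*S2 \<le> 3/8*((8*R/3) / (R/Z + \<epsilon>))" using S2le by simp
    also have "\<dots> = R / (R/Z + \<epsilon>)"
    proof -
      have gen: "\<And>X::real. 3/8*((8*R/3)/X) = R/X" by simp
      show ?thesis by (rule gen)
    qed
    also have "\<dots> < Z"
    proof -
      have "R < Z*(R/Z + \<epsilon>)" using Zpos e0 by (simp add: algebra_simps)
      thus ?thesis using Zpos R0 e0 by (simp add: divide_simps mult.commute)
    qed
    finally show ?thesis .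
  qed
  define L where "L = ln (2::real)"
  have L0: "L > 0" by (simp add: L_def)
  have Km0: "Km > 0" using Km10 by simp
  define x0 where "x0 = 4*R/(3*Km)"
  have x00: "x0 > 0" using R0 Km0 by (simp add: x0_def)
  define B where "B = sqrt(\<alpha>*\<rho>r*Km)"
  define C where "C = Km*(\<rho>r+\<rho>d)"
  have B0: "B \<ge> 0" and C0: "C \<ge> 0" using a0 rr rd Km0 by (simp_all add: B_def C_def)
  have ex0: "exp(L*x0) > 1" using L0 x00 by simp
  have q0: "qf L x0 \<ge> 0" using ex0 by (simp add: qf_def)
  have gsq: "(g x0)^2 = x0 * qf L x0"
  proof -
    have "(g x0)^2 = (sqrt (x0 / (exp(L*x0) - 1)))^2 * (L*x0*exp(L*x0) - exp(L*x0) + 1)^2"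
      unfolding g_def pw2 L_def[symmetric] by (simp add: power_mult_distrib ac_simps)
    also have "(sqrt (x0 / (exp(L*x0) - 1)))^2 = x0 / (exp(L*x0) - 1)" using ex0 x00 by simp
    finally show ?thesis by (simp add: qf_def)
  qed
  have hq: "B^2 * qf L x0 \<le> C^2"
  proof -
    have h: "\<rho>r > 3 * \<alpha> / (4 * (1 + \<rho>d / \<rho>r)\<^sup>2 * R) * (x0 * qf L x0)"
      using assms(10) gsq unfolding Km_def[symmetric] x0_def[symmetric] by simp
    have "\<rho>d / \<rho>r > 0" using rr rd by simp
    hence bp: "(1 + \<rho>d / \<rho>r)\<^sup>2 > 0" by (smt (verit) zero_less_power)
    have "3 * \<alpha> / (4 * (1 + \<rho>d / \<rho>r)\<^sup>2 * R) * (x0 * qf L x0) = \<alpha> * qf L x0 / ((1 + \<rho>d / \<rho>r)\<^sup>2 * Km)"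
      using R0 Km0 bp by (simp add: x0_def field_simps)
    hence "\<alpha> * qf L x0 / ((1 + \<rho>d / \<rho>r)\<^sup>2 * Km) < \<rho>r" using h by simp
    hence "\<alpha> * qf L x0 < \<rho>r * ((1 + \<rho>d / \<rho>r)\<^sup>2 * Km)" using bp Km0 by (simp add: pos_divide_less_eq)
    hence "(\<rho>r*Km) * (\<alpha> * qf L x0) \<le> (\<rho>r*Km) * (\<rho>r * ((1 + \<rho>d / \<rho>r)\<^sup>2 * Km))"
      using rr Km0 by (intro mult_left_mono) auto
    moreover have "(\<rho>r*Km) * (\<rho>r * ((1 + \<rho>d / \<rho>r)\<^sup>2 * Km)) = C^2"
      unfolding C_def using rr by (simp add: power2_eq_square field_simps)
    moreover have "B^2 = \<alpha>*\<rho>r*Km" unfolding B_def using a0 rr Km0 by simp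
    hence "B^2 * qf L x0 = (\<rho>r*Km) * (\<alpha> * qf L x0)" by (simp add: ac_simps)
    ultimately show ?thesis by linarith
  qed
  define m where "m = min (1/(4*R)) (R/(3*Km^2*x0^2))"
  have m0: "m > 0" using R0 Km0 x00 by (simp add: m_def)
  have m1: "m \<le> 1/(4*R)" "m \<le> R/(3*Km^2*x0^2)" by (simp_all add: m_def)
  define \<gamma> where "\<gamma> = \<rho>s * m"
  have g0: "\<gamma> > 0" using rs m0 by (simp add: \<gamma>_def)
  have Kmle: "Km \<le> Kmax \<alpha> \<rho>r \<rho>d \<rho>s \<rho>0 T" by (simp add: Km_def)
  have S2ge: "(4*R/3) / Pc \<alpha> \<rho>r \<rho>d \<rho>s (4*R/3) K \<le> S2" if "1 \<le> K" "K \<le> Km" for K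
    unfolding S2_def using that by (intro csi_sup_ge[OF R43 a0 rr rd rs]) (simp_all add: Km_def)
  have S2pos: "S2 > 0"
  proof -
    have "Pc \<alpha> \<rho>r \<rho>d \<rho>s (4*R/3) 1 > 0" using csi_le_P(2)[OF R43 _ _ a0 rr rd rs, of 1 2] by simp
    hence "(4*R/3) / Pc \<alpha> \<rho>r \<rho>d \<rho>s (4*R/3) 1 > 0" using R0 by simp
    thus ?thesis using S2ge[of 1] Km1 by linarith
  qed
  have key: "Pc \<alpha> \<rho>r \<rho>d \<rho>s R K / R \<ge> 1/S2 + \<gamma>" if K: "1 \<le> K" "K \<le> Km" for K
  proof -
    define P where "P = Pc \<alpha> \<rho>r \<rho>d \<rho>s R K"
    have K0: "K > 0" using K by simp
    define E where "E = 2 powr (R/K) - 1"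
    have E0: "E > 0" using E_pos[OF R0 K0] by (simp add: E_def)
    have Pdef: "P = 2*sqrt(\<alpha>*\<rho>r*K*E) + K*(\<rho>r+\<rho>d) + \<rho>s" by (simp add: P_def Pc_def E_def)
    show ?thesis
    proof (cases "4*K/3 \<le> Km")
      case True
      define P' where "P' = Pc \<alpha> \<rho>r \<rho>d \<rho>s (4*R/3) (4*K/3)"
      have P'pos: "P' > 0" unfolding P'_def using csi_le_P(2)[OF R43 _ _ a0 rr rd rs, of "4*K/3" "4*K/3+1"] K0 by simp
      have "(4*R/3) / P' \<le> S2" unfolding P'_def using S2ge[of "4*K/3"] True K by simp
      hence i1: "1/S2 \<le> P'/(4*R/3)" using P'pos S2pos R0 by (simp add: divide_simps mult.commute)
      have rk: "(4*R/3)/(4*K/3) = R/K" by simp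
      have sq: "sqrt(\<alpha>*\<rho>r*(4*K/3)*E) \<le> (4/3)*sqrt(\<alpha>*\<rho>r*K*E)"
      proof -
        have "sqrt(\<alpha>*\<rho>r*(4*K/3)*E) = sqrt(4/3) * sqrt(\<alpha>*\<rho>r*K*E)"
          by (simp add: real_sqrt_mult[symmetric] ac_simps)
        moreover have "sqrt(4/3::real) \<le> 4/3"
        proof -
          have "(4/3::real) \<le> (4/3)^2" by (simp add: power2_eq_square)
          hence "sqrt(4/3::real) \<le> sqrt((4/3)^2)" by (rule real_sqrt_le_mono)
          thus ?thesis by simp
        qed
        moreover have "sqrt(\<alpha>*\<rho>r*K*E) \<ge> 0" using a0 rr K0 E0 by simp
        ultimately show ?thesis by (metis mult_right_mono)
      qed
      have "P' = 2*sqrt(\<alpha>*\<rho>r*(4*K/3)*E) + (4*K/3)*(\<rho>r+\<rho>d) + \<rho>s"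
        unfolding P'_def Pc_def rk E_def ..
      moreover have "(4/3)*P - \<rho>s/3 = 2*((4/3)*sqrt(\<alpha>*\<rho>r*K*E)) + (4*K/3)*(\<rho>r+\<rho>d) + \<rho>s"
        unfolding Pdef by (simp add: algebra_simps)
      ultimately have "P' \<le> (4/3)*P - \<rho>s/3" using sq by linarith
      hence "P'/(4*R/3) \<le> ((4/3)*P - \<rho>s/3)/(4*R/3)" using R0 by (intro divide_right_mono) auto
      also have "\<dots> = P/R - \<rho>s/(4*R)" using R0 by (simp add: field_simps)
      finally have "1/S2 \<le> P/R - \<rho>s/(4*R)" using i1 by linarith
      moreover have "\<gamma> \<le> \<rho>s/(4*R)" unfolding \<gamma>_def using m1(1) rs by (simp add: mult_left_mono[of m "1/(4*R)" \<rho>s, simplified])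
      ultimately show ?thesis unfolding P_def by linarith
    next
      case False
      define x1 where "x1 = R/K"
      have x10: "x1 > 0" using R0 K0 by (simp add: x1_def)
      have x1le: "x1 \<le> x0" using False R0 K0 Km0 by (simp add: x1_def x0_def field_simps)
      have Eexp: "E = exp(L*x1) - 1" by (simp add: E_def pw2 L_def x1_def)
      define F where "F = (\<lambda>x. (2*B*sqrt(exp(L*x)-1) + (C+\<rho>s))/x)"
      have hF: "F x0 \<le> F x1 - \<rho>s*(x0-x1)/x0^2"
        unfolding F_def using F_dec[OF L0 B0 C0 rs x10 x1le hq] by simp
      define Y where "Y = sqrt(\<alpha>*\<rho>r*E)"
      have Y0: "Y \<ge> 0" using a0 rr E0 by (simp add: Y_def)
      have BY: "B*sqrt E = sqrt Km * Y" unfolding B_def Y_def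
        by (simp add: real_sqrt_mult[symmetric] ac_simps)
      have KY: "sqrt(\<alpha>*\<rho>r*K*E) = sqrt K * Y" unfolding Y_def
        by (simp add: real_sqrt_mult[symmetric] ac_simps)
      have sK: "sqrt K \<le> sqrt Km" using K by simp
      have "Km * sqrt K = sqrt K * (sqrt Km * sqrt Km)" using Km0 by simp
      also have "\<dots> \<ge> sqrt K * (sqrt K * sqrt Km)" using sK K0 Km0
        by (intro mult_left_mono mult_right_mono) auto
      moreover have "sqrt K * (sqrt K * sqrt Km) = (sqrt K * sqrt K) * sqrt Km" by (simp only: mult.assoc)
      moreover have "(sqrt K * sqrt K) * sqrt Km = K * sqrt Km" using K0 by simp
      ultimately have "Km * sqrt K \<ge> K * sqrt Km" by linarith
      hence "(Km * sqrt K) * Y \<ge> (K * sqrt Km) * Y" using Y0 by (rule mult_right_mono)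
      hence s1: "Km * sqrt(\<alpha>*\<rho>r*K*E) \<ge> K * (B*sqrt E)" unfolding KY BY by (simp add: ac_simps)
      have i: "Km*P \<ge> K*(2*B*sqrt E + C + \<rho>s) + (Km-K)*\<rho>s"
      proof -
        have "Km*P = 2*(Km*sqrt(\<alpha>*\<rho>r*K*E)) + K*C + Km*\<rho>s" unfolding Pdef C_def by (simp add: algebra_simps)
        moreover have "K*(2*B*sqrt E + C + \<rho>s) + (Km-K)*\<rho>s = 2*(K * (B*sqrt E)) + K*C + Km*\<rho>s"
          by (simp add: algebra_simps)
        ultimately show ?thesis using s1 by linarith
      qed
      have Fx1: "F x1 = (2*B*sqrt E + (C + \<rho>s))/x1" unfolding F_def Eexp by simp
      have "K*(2*B*sqrt E + C + \<rho>s) = R * F x1"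
        unfolding Fx1 using K0 R0 by (simp add: x1_def field_simps)
      hence "Km*P \<ge> R * F x1 + (Km-K)*\<rho>s" using i by linarith
      hence "(R * F x1 + (Km-K)*\<rho>s)/(Km*R) \<le> (Km*P)/(Km*R)" using R0 Km0 by (intro divide_right_mono) auto
      moreover have "(Km*P)/(Km*R) = P/R" using Km0 by simp
      moreover have "(R * F x1 + (Km-K)*\<rho>s)/(Km*R) = F x1/Km + (Km-K)*\<rho>s/(Km*R)"
        using R0 Km0 by (simp add: add_divide_distrib)
      ultimately have ii: "P/R \<ge> F x1/Km + (Km-K)*\<rho>s/(Km*R)" by simp
      define P0 where "P0 = Pc \<alpha> \<rho>r \<rho>d \<rho>s (4*R/3) Km"
      have P0pos: "P0 > 0" unfolding P0_def using csi_le_P(2)[OF R43 _ _ a0 rr rd rs, of Km "Km+1"] Km0 by simp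
      have "(4*R/3) / P0 \<le> S2" unfolding P0_def using S2ge[of Km] Km1 by simp
      hence i1: "1/S2 \<le> P0/(4*R/3)" using P0pos S2pos R0 by (simp add: divide_simps mult.commute)
      have E0e: "2 powr ((4*R/3)/Km) - 1 = exp(L*x0) - 1" by (simp add: pw2 L_def x0_def)
      have "sqrt(\<alpha>*\<rho>r*Km*(exp(L*x0) - 1)) = B*sqrt(exp(L*x0) - 1)" unfolding B_def
        by (simp add: real_sqrt_mult[symmetric])
      hence "P0 = 2*B*sqrt(exp(L*x0) - 1) + C + \<rho>s" unfolding P0_def Pc_def E0e C_def by simp
      hence "P0/(4*R/3) = F x0 / Km" unfolding F_def x0_def using R0 Km0 by (simp add: field_simps)
      hence iii: "1/S2 \<le> F x0 / Km" using i1 by simp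
      have "P/R - 1/S2 \<ge> (F x1 - F x0)/Km + (Km-K)*\<rho>s/(Km*R)"
        using ii iii by (simp add: diff_divide_distrib)
      moreover have "(F x1 - F x0)/Km \<ge> (\<rho>s*(x0-x1)/x0^2)/Km"
        using hF Km0 by (intro divide_right_mono) auto
      ultimately have iv: "P/R - 1/S2 \<ge> \<rho>s*((x0-x1)/x0^2 + (Km-K)/R)/Km"
        by (simp add: add_divide_distrib algebra_simps)
      have v: "(x0-x1)/x0^2 + (Km-K)/R \<ge> m*Km"
      proof -
        have a1: "(Km-K)/R \<ge> 4*m*(Km-K)"
        proof -
          have "4*m \<le> 1/R" using m1(1) R0 by (simp add: field_simps)
          hence "4*m*(Km-K) \<le> (1/R)*(Km-K)" using K by (intro mult_right_mono) auto
          thus ?thesis by simp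
        qed
        have "x0 - x1 = R*(4*K-3*Km)/(3*Km*K)" unfolding x0_def x1_def using K0 Km0 by (simp add: field_simps)
        hence b1: "(x0-x1)/x0^2 = (R/(3*Km*K*x0^2))*(4*K-3*Km)" by simp
        have b2: "(R/(3*Km*K*x0^2))*(4*K-3*Km) \<ge> (R/(3*Km^2*x0^2))*(4*K-3*Km)"
        proof (rule mult_right_mono)
          show "0 \<le> 4*K-3*Km" using False by simp
          have "(3*Km*x0^2)*K \<le> (3*Km*x0^2)*Km" using K Km0 by (intro mult_left_mono) auto
          hence "3*Km*K*x0^2 \<le> 3*Km^2*x0^2" by (simp add: power2_eq_square ac_simps)
          thus "R/(3*Km^2*x0^2) \<le> R/(3*Km*K*x0^2)" using R0 K0 Km0 x00
            by (intro divide_left_mono) auto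
        qed
        have b3: "(R/(3*Km^2*x0^2))*(4*K-3*Km) \<ge> m*(4*K-3*Km)"
          using m1(2) False by (intro mult_right_mono) auto
        have a2: "(x0-x1)/x0^2 \<ge> m*(4*K-3*Km)" using b1 b2 b3 by linarith
        have "4*m*(Km-K) + m*(4*K-3*Km) = m*Km" by (simp add: algebra_simps)
        thus ?thesis using a1 a2 by linarith
      qed
      have "\<rho>s*((x0-x1)/x0^2 + (Km-K)/R)/Km \<ge> \<rho>s*(m*Km)/Km"
        using v rs Km0 by (intro divide_right_mono mult_left_mono) auto
      also have "\<rho>s*(m*Km)/Km = \<gamma>" using Km0 by (simp add: \<gamma>_def)
      finally show ?thesis using iv unfolding P_def by linarith
    qed
  qed
  have S1le: "S1 \<le> 1/(1/S2 + \<gamma>)" unfolding S1_def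
  proof (rule csi_sup_le[OF R0 a0 rr rd rs])
    show "1 \<le> Kmax \<alpha> \<rho>r \<rho>d \<rho>s \<rho>0 T" using Km1 by (simp add: Km_def)
    fix M K assume K: "1 \<le> K" "K \<le> Kmax \<alpha> \<rho>r \<rho>d \<rho>s \<rho>0 T" "K < M"
    hence K': "K \<le> Km" by (simp add: Km_def)
    have K0: "K > 0" using K by simp
    have v: "zeta_csi M K R \<alpha> \<rho>r \<rho>d \<rho>s \<rho>0 T \<le> R / Pc \<alpha> \<rho>r \<rho>d \<rho>s R K"
      and Pp: "Pc \<alpha> \<rho>r \<rho>d \<rho>s R K > 0" using csi_le_P[OF R0 K0 K(3) a0 rr rd rs] by auto
    have "R / Pc \<alpha> \<rho>r \<rho>d \<rho>s R K = 1 / (Pc \<alpha> \<rho>r \<rho>d \<rho>s R K / R)" by simp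
    also have "\<dots> \<le> 1/(1/S2 + \<gamma>)"
    proof -
      have "1/S2 > 0" using S2pos by simp
      hence p: "1/S2 + \<gamma> > 0" using g0 by linarith
      hence "Pc \<alpha> \<rho>r \<rho>d \<rho>s R K / R > 0" using key[OF K(1) K'] by linarith
      thus ?thesis using key[OF K(1) K'] p by (intro divide_left_mono mult_pos_pos) auto
    qed
    finally show "zeta_csi M K R \<alpha> \<rho>r \<rho>d \<rho>s \<rho>0 T \<le> 1/(1/S2 + \<gamma>)" using v by linarith
  qed
  have "1/(1/S2 + \<gamma>) < S2"
  proof -
    have "1 < S2 * (1/S2 + \<gamma>)" using S2pos g0 by (simp add: algebra_simps)
    moreover have "1/S2 + \<gamma> > 0" using S2pos g0 by (smt (verit) divide_pos_pos)
    ultimately show ?thesis by (simp add: divide_simps mult.commute)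
  qed
  hence "S1 < S2" using S1le by linarith
  thus ?thesis using partA unfolding Z_def S2_def S1_def by simp
qed

end
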